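(* Let $n\ge2$, let $D$ and $D'$ be proper subdomains of $\mathbb{R}^n$, and let $f:\overline{\mathbb{R}}^n\to\overline{\mathbb{R}}^n$ be a Möbius transformation with $f(D)=D'$. Then for all $x,y\in D$, $$\tfrac12\tilde\tau_D(x,y)\le\tilde\tau_{D'}(f(x),f(y))\le2\tilde\tau_D(x,y).$$
   Context: $\overline{\mathbb{R}}^n=\mathbb{R}^n\cup\{\infty\}$; a Möbius transformation is a finite composition of reflections in spheres and hyperplanes. For a proper subdomain $D\subsetneq\mathbb{R}^n$ and $x,y\in D$, $\tilde\tau_D(x,y)=\log\big(1+\sup_{p\in\partial D}\frac{|x-y|}{\sqrt{|x-p||y-p|}}\big)$ (the scale invariant Cassinian metric), where $\partial D$ is the boundary of $D$ in $\mathbb{R}^n$. *)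

theory Defs
  imports "HOL-Analysis.Analysis"
begin

text \<open>Extended space: None plays the role of the point at infinity.\<close>
type_synonym 'n ext = "(real ^ 'n) option"

definition sphere_refl :: "real ^ 'n::finite \<Rightarrow> real \<Rightarrow> 'n ext \<Rightarrow> 'n ext" where
  "sphere_refl a r z = (case z of
       None \<Rightarrow> Some a
     | Some x \<Rightarrow> (if x = a then None
                  else Some (a + (r\<^sup>2 / (norm (x - a))\<^sup>2) *\<^sub>R (x - a))))"

definition hyperplane_refl :: "real ^ 'n::finite \<Rightarrow> real \<Rightarrow> 'n ext \<Rightarrow> 'n ext" where
  "hyperplane_refl u t z = map_option
       (\<lambda>x. x - (2 * (u \<bullet> x - t) / (norm u)\<^sup>2) *\<^sub>R u) z"

inductive is_reflection :: "('n::finite ext \<Rightarrow> 'n ext) \<Rightarrow> bool" where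
  sphere: "r > 0 \<Longrightarrow> is_reflection (sphere_refl a r)"
| hyperplane: "u \<noteq> 0 \<Longrightarrow> is_reflection (hyperplane_refl u t)"

inductive mobius :: "('n::finite ext \<Rightarrow> 'n ext) \<Rightarrow> bool" where
  refl: "is_reflection g \<Longrightarrow> mobius g"
| comp: "mobius f \<Longrightarrow> is_reflection g \<Longrightarrow> mobius (g \<circ> f)"

definition proper_domain :: "(real ^ 'n::finite) set \<Rightarrow> bool" where
  "proper_domain D \<longleftrightarrow> open D \<and> connected D \<and> D \<noteq> {} \<and> D \<noteq> UNIV"

definition sic_metric :: "(real ^ 'n::finite) set \<Rightarrow> real ^ 'n \<Rightarrow> real ^ 'n \<Rightarrow> real" where
  "sic_metric D x y = ln (1 + (SUP p\<in>frontier D. dist x y / sqrt (dist x p * dist y p)))"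

end

theory Submission
  imports Defs
begin


lemma inv_dist:
  fixes X Y :: "'a::real_inner"
  assumes "X \<noteq> 0" "Y \<noteq> 0" "r > 0"
  shows "norm ((r\<^sup>2 / (norm X)\<^sup>2) *\<^sub>R X - (r\<^sup>2 / (norm Y)\<^sup>2) *\<^sub>R Y) = r\<^sup>2 * norm (X - Y) / (norm X * norm Y)"
proof -
  have nx: "norm X > 0" "norm Y > 0" using assms by auto
  have "(norm ((r\<^sup>2 / (norm X)\<^sup>2) *\<^sub>R X - (r\<^sup>2 / (norm Y)\<^sup>2) *\<^sub>R Y))\<^sup>2
      = (r\<^sup>2 * norm (X - Y) / (norm X * norm Y))\<^sup>2"
    using nx
    apply (simp add: power2_norm_eq_inner inner_diff_left inner_diff_right inner_commute power_divide power_mult_distrib)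
    apply (simp add: power2_norm_eq_inner[symmetric] field_simps power2_eq_square)
    done
  then show ?thesis
    by (rule power2_eq_imp_eq[OF _ norm_ge_zero]) (use nx in simp)
qed



fun dd :: "'n::finite ext \<Rightarrow> 'n ext \<Rightarrow> real" where
  "dd (Some x) (Some y) = dist x y"
| "dd (Some x) None = 1"
| "dd None (Some y) = 1"
| "dd None None = 0"

definition dconf :: "('n::finite ext \<Rightarrow> 'n ext) \<Rightarrow> bool" where
  "dconf f \<longleftrightarrow> (\<exists>k. (\<forall>z. k z > 0) \<and> (\<forall>z w. dd (f z) (f w) = k z * k w * dd z w))"

lemma sphere_refl_some:
  "x \<noteq> a \<Longrightarrow> sphere_refl a r (Some x) = Some (a + (r\<^sup>2 / (norm (x - a))\<^sup>2) *\<^sub>R (x - a))"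
  by (simp add: sphere_refl_def)

lemma sphere_refl_dist:
  fixes x y a :: "'a::real_inner"
  assumes "x \<noteq> a" "y \<noteq> a" "r > 0"
  shows "dist (a + (r\<^sup>2 / (norm (x - a))\<^sup>2) *\<^sub>R (x - a)) (a + (r\<^sup>2 / (norm (y - a))\<^sup>2) *\<^sub>R (y - a))
       = r\<^sup>2 * dist x y / (dist x a * dist y a)"
proof -
  have "dist (a + (r\<^sup>2 / (norm (x - a))\<^sup>2) *\<^sub>R (x - a)) (a + (r\<^sup>2 / (norm (y - a))\<^sup>2) *\<^sub>R (y - a))
     = norm ((r\<^sup>2 / (norm (x - a))\<^sup>2) *\<^sub>R (x - a) - (r\<^sup>2 / (norm (y - a))\<^sup>2) *\<^sub>R (y - a))"
    by (simp add: dist_norm)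
  also have "\<dots> = r\<^sup>2 * norm ((x - a) - (y - a)) / (norm (x - a) * norm (y - a))"
    by (rule inv_dist) (use assms in auto)
  finally show ?thesis by (simp add: dist_norm)
qed

lemma sphere_refl_dist_center:
  assumes "x \<noteq> a" "r > 0"
  shows "dist (a + (r\<^sup>2 / (norm (x - a))\<^sup>2) *\<^sub>R (x - a)) a = r * r / dist x a"
proof -
  have n: "norm (x - a) > 0" using assms by auto
  have "dist (a + (r\<^sup>2 / (norm (x - a))\<^sup>2) *\<^sub>R (x - a)) a = (r\<^sup>2 / (norm (x - a))\<^sup>2) * norm (x - a)"
    by (simp add: dist_norm)
  also have "\<dots> = r\<^sup>2 / norm (x - a)" using n by (simp add: power2_eq_square)
  finally show ?thesis by (simp add: dist_norm power2_eq_square)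
qed

lemma sphere_refl_dist_center':
  assumes "x \<noteq> a" "r > 0"
  shows "dist a (a + (r\<^sup>2 / (norm (x - a))\<^sup>2) *\<^sub>R (x - a)) = r * r / dist x a"
  using sphere_refl_dist_center[OF assms] by (simp add: dist_commute)

lemma sphere_refl_dconf:
  assumes r: "r > 0"
  shows "dconf (sphere_refl a r)"
proof -
  define k where "k z = (case z of None \<Rightarrow> r | Some x \<Rightarrow> if x = a then 1 / r else r / dist x a)" for z
  have kpos: "\<forall>z. k z > 0" using r by (auto simp: k_def split: option.splits)
  have eq: "dd (sphere_refl a r z) (sphere_refl a r w) = k z * k w * dd z w" for z w
  proof (cases z)
    case None
    then show ?thesis
    proof (cases w)
      case None2: None
      then show ?thesis using None by (simp add: sphere_refl_def)
    next
      case (Some y)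
      then show ?thesis using None r
        by (cases "y = a") (auto simp: sphere_refl_def k_def sphere_refl_dist_center sphere_refl_dist_center')
    qed
  next
    case (Some x)
    then show ?thesis
    proof (cases w)
      case None
      then show ?thesis using Some r
        by (cases "x = a") (auto simp: sphere_refl_def k_def sphere_refl_dist_center sphere_refl_dist_center')
    next
      case Some2: (Some y)
      show ?thesis
      proof (cases "x = a")
        case True
        then show ?thesis using Some Some2 r
          by (cases "y = a") (auto simp: sphere_refl_def k_def dist_commute)
      next
        case False
        show ?thesis
        proof (cases "y = a")
          case True
          then show ?thesis using Some Some2 r False by (auto simp: sphere_refl_def k_def dist_commute)
        next
          case yne: False
          have "dd (sphere_refl a r z) (sphere_refl a r w) = dist (a + (r\<^sup>2 / (norm (x - a))\<^sup>2) *\<^sub>R (x - a)) (a + (r\<^sup>2 / (norm (y - a))\<^sup>2) *\<^sub>R (y - a))"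
            by (simp only: Some Some2 sphere_refl_some[OF False] sphere_refl_some[OF yne] dd.simps)
          also have "\<dots> = r\<^sup>2 * dist x y / (dist x a * dist y a)"
            by (rule sphere_refl_dist) (use False yne r in auto)
          also have "\<dots> = k z * k w * dd z w"
            using False yne by (simp add: k_def Some Some2 power2_eq_square)
          finally show ?thesis .
        qed
      qed
    qed
  qed
  show ?thesis unfolding dconf_def using kpos eq by blast
qed

lemma sphere_refl_invol: "r > 0 \<Longrightarrow> sphere_refl a r (sphere_refl a r z) = z"
proof (cases z)
  case None
  then show ?thesis by (simp add: sphere_refl_def)
next
  case (Some x)
  assume r: "r > 0"
  show ?thesis
  proof (cases "x = a")
    case True
    then show ?thesis using Some by (simp add: sphere_refl_def)
  next
    case False
    define t where "t = r\<^sup>2 / (norm (x - a))\<^sup>2"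
    have t: "t > 0" using False r by (simp add: t_def)
    have ne: "a + t *\<^sub>R (x - a) \<noteq> a" using t False by simp
    have nt: "norm (t *\<^sub>R (x - a)) = t * norm (x - a)" using t by simp
    have "(r\<^sup>2 / (norm (t *\<^sub>R (x - a)))\<^sup>2) * t = 1"
      unfolding nt using t False r by (simp add: t_def power_mult_distrib field_simps)
    then have "a + (r\<^sup>2 / (norm (t *\<^sub>R (x - a)))\<^sup>2) *\<^sub>R (t *\<^sub>R (x - a)) = a + 1 *\<^sub>R (x - a)"
      by (simp only: scaleR_scaleR)
    then have "a + (r\<^sup>2 / (norm (t *\<^sub>R (x - a)))\<^sup>2) *\<^sub>R (t *\<^sub>R (x - a)) = x"
      by simp
    then show ?thesis using Some False ne by (simp add: sphere_refl_def t_def)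
  qed
qed

lemma hyperplane_refl_some:
  "hyperplane_refl u t (Some x) = Some (x - (2 * (u \<bullet> x - t) / (norm u)\<^sup>2) *\<^sub>R u)"
  by (simp add: hyperplane_refl_def)

lemma hyperplane_dist:
  fixes u :: "'a::real_inner"
  assumes "u \<noteq> 0"
  shows "dist (x - (2 * (u \<bullet> x - t) / (norm u)\<^sup>2) *\<^sub>R u) (y - (2 * (u \<bullet> y - t) / (norm u)\<^sup>2) *\<^sub>R u) = dist x y"
proof -
  have n: "norm u > 0" using assms by simp
  have e: "(x - (2 * (u \<bullet> x - t) / (norm u)\<^sup>2) *\<^sub>R u) - (y - (2 * (u \<bullet> y - t) / (norm u)\<^sup>2) *\<^sub>R u)
      = (x - y) - (2 * (u \<bullet> (x - y)) / (norm u)\<^sup>2) *\<^sub>R u"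
    by (simp add: inner_diff_right algebra_simps diff_divide_distrib)
  have "(norm ((x - y) - (2 * (u \<bullet> (x - y)) / (norm u)\<^sup>2) *\<^sub>R u))\<^sup>2 = (norm (x - y))\<^sup>2"
    using n
    apply (simp add: power2_norm_eq_inner inner_diff_left inner_diff_right inner_commute)
    done
  then have "norm ((x - y) - (2 * (u \<bullet> (x - y)) / (norm u)\<^sup>2) *\<^sub>R u) = norm (x - y)"
    using power2_eq_imp_eq norm_ge_zero by blast
  then show ?thesis by (simp only: dist_norm e)
qed

lemma hyperplane_refl_dconf:
  assumes "u \<noteq> 0"
  shows "dconf (hyperplane_refl u t)"
proof -
  have "dd (hyperplane_refl u t z) (hyperplane_refl u t w) = 1 * 1 * dd z w" for z w
    by (cases z; cases w) (simp_all only: hyperplane_refl_def option.map dd.simps hyperplane_dist[OF assms] mult_1 mult_zero_right)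
  then show ?thesis unfolding dconf_def by (intro exI[of _ "\<lambda>_. 1"]) auto
qed

lemma hyperplane_refl_invol:
  assumes "u \<noteq> 0"
  shows "hyperplane_refl u t (hyperplane_refl u t z) = z"
proof (cases z)
  case None
  then show ?thesis by (simp add: hyperplane_refl_def)
next
  case (Some x)
  have n: "norm u > 0" using assms by simp
  define l where "l = 2 * (u \<bullet> x - t) / (norm u)\<^sup>2"
  have "u \<bullet> (x - l *\<^sub>R u) - t = - (u \<bullet> x - t)"
    using n by (simp add: l_def inner_diff_right power2_norm_eq_inner[symmetric] field_simps power2_eq_square)
  then have "2 * (u \<bullet> (x - l *\<^sub>R u) - t) / (norm u)\<^sup>2 = 2 * (- (u \<bullet> x - t)) / (norm u)\<^sup>2" by simp
  also have "\<dots> = - l" by (simp add: l_def minus_divide_left)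
  finally have "2 * (u \<bullet> (x - l *\<^sub>R u) - t) / (norm u)\<^sup>2 = - l" .
  note H = this
  have h1: "hyperplane_refl u t (Some x) = Some (x - l *\<^sub>R u)"
    by (simp only: hyperplane_refl_def option.map l_def)
  have h2: "hyperplane_refl u t (Some (x - l *\<^sub>R u)) = Some ((x - l *\<^sub>R u) - (- l) *\<^sub>R u)"
    by (simp only: hyperplane_refl_def option.map H)
  show ?thesis using Some h1 h2 by simp
qed

lemma reflection_props: "is_reflection g \<Longrightarrow> dconf g \<and> (\<forall>z. g (g z) = z)"
  by (induction rule: is_reflection.induct)
     (auto simp: sphere_refl_dconf sphere_refl_invol hyperplane_refl_dconf hyperplane_refl_invol)

lemma dconf_comp: "dconf f \<Longrightarrow> dconf g \<Longrightarrow> dconf (g \<circ> f)"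
proof -
  assume "dconf f" "dconf g"
  then obtain kf kg where kf: "\<forall>z. kf z > 0" "\<forall>z w. dd (f z) (f w) = kf z * kf w * dd z w"
    and kg: "\<forall>z. kg z > 0" "\<forall>z w. dd (g z) (g w) = kg z * kg w * dd z w"
    unfolding dconf_def by blast
  have "\<forall>z. kg (f z) * kf z > 0" using kf kg by simp
  moreover have "\<forall>z w. dd ((g \<circ> f) z) ((g \<circ> f) w) = (kg (f z) * kf z) * (kg (f w) * kf w) * dd z w"
    using kf kg by simp
  ultimately show ?thesis unfolding dconf_def by (intro exI[of _ "\<lambda>z. kg (f z) * kf z"]) simp
qed

lemma mobius_props: "mobius f \<Longrightarrow> dconf f \<and> bij f"
proof (induction rule: mobius.induct)
  case (refl g)
  then show ?case using reflection_props[OF refl] by (metis bij_betw_imp_surj_on bijI' )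
next
  case (comp f g)
  have bg: "bij g" using reflection_props[OF comp(2)] by (metis bijI')
  show ?case using comp dconf_comp reflection_props[OF comp(2)] bg bij_comp by blast
qed



lemma AL_real:
  fixes a a' b b' u d :: real
  assumes pos: "a > 0" "a' > 0" "b > 0" "b' > 0" "u \<ge> 0" "d \<ge> 0"
    and tri: "\<bar>a - a'\<bar> \<le> u" "\<bar>b - b'\<bar> \<le> u" "d \<le> a + b" "d \<le> a' + b'"
    and le: "b * b' \<le> a * a'"
  shows "u * d / (sqrt (a * a') * sqrt (b * b')) \<le> 2 * (u / sqrt (b * b')) + (u / sqrt (b * b'))\<^sup>2"
proof -
  define G where "G = sqrt (a * a')"
  define H where "H = sqrt (b * b')"
  have G: "G > 0" "G\<^sup>2 = a * a'" using pos by (auto simp: G_def)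
  have H: "H > 0" "H\<^sup>2 = b * b'" using pos by (auto simp: H_def)
  have HG: "H \<le> G" unfolding G_def H_def using le by simp
  define K where "K = G\<^sup>2 * (2 + u\<^sup>2 / H\<^sup>2)"
  have uGH: "u\<^sup>2 \<le> G\<^sup>2 * u\<^sup>2 / H\<^sup>2"
  proof -
    have "H\<^sup>2 \<le> G\<^sup>2" using HG H(1) by (simp add: power_mono)
    then have "u\<^sup>2 * H\<^sup>2 \<le> G\<^sup>2 * u\<^sup>2" by (metis mult.commute mult_right_mono zero_le_power2)
    then show ?thesis using H(1) by (simp add: field_simps)
  qed
  have HH: "H\<^sup>2 \<le> G\<^sup>2" using HG H(1) by (simp add: power_mono)
  have K1: "u\<^sup>2 + 2 * G\<^sup>2 \<le> K" using uGH unfolding K_def by (simp add: algebra_simps)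
  have K2: "u\<^sup>2 + 2 * H\<^sup>2 \<le> K" using uGH HH unfolding K_def by (simp add: algebra_simps)
  have s1: "a\<^sup>2 + a'\<^sup>2 \<le> u\<^sup>2 + 2 * G\<^sup>2"
  proof -
    have "(a - a')\<^sup>2 \<le> u\<^sup>2" using tri(1) by (metis abs_le_square_iff abs_of_nonneg pos(5))
    then show ?thesis using G(2) by (simp add: power2_eq_square algebra_simps)
  qed
  have s2: "b\<^sup>2 + b'\<^sup>2 \<le> u\<^sup>2 + 2 * H\<^sup>2"
  proof -
    have "(b - b')\<^sup>2 \<le> u\<^sup>2" using tri(2) by (metis abs_le_square_iff abs_of_nonneg pos(5))
    then show ?thesis using H(2) by (simp add: power2_eq_square algebra_simps)
  qed
  have cs: "(a * b' + a' * b)\<^sup>2 \<le> (a\<^sup>2 + a'\<^sup>2) * (b\<^sup>2 + b'\<^sup>2)"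
  proof -
    have "(a\<^sup>2 + a'\<^sup>2) * (b\<^sup>2 + b'\<^sup>2) - (a * b' + a' * b)\<^sup>2 = (a * b - a' * b')\<^sup>2"
      by (simp add: power2_eq_square algebra_simps)
    then show ?thesis by (metis diff_ge_0_iff_ge zero_le_power2)
  qed
  have Kpos: "K \<ge> 0" unfolding K_def by simp
  have "(a\<^sup>2 + a'\<^sup>2) * (b\<^sup>2 + b'\<^sup>2) \<le> K * K"
    using s1 s2 K1 K2 Kpos by (intro mult_mono) (auto intro: add_nonneg_nonneg)
  then have "(a * b' + a' * b)\<^sup>2 \<le> K\<^sup>2" using cs by (simp add: power2_eq_square)
  then have cross: "a * b' + a' * b \<le> K" using Kpos by (rule power2_le_imp_le)
  have dsq: "d\<^sup>2 \<le> (a + b) * (a' + b')"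
  proof -
    have "d * d \<le> (a + b) * (a' + b')"
      using tri(3,4) pos by (intro mult_mono) auto
    then show ?thesis by (simp add: power2_eq_square)
  qed
  have "(a + b) * (a' + b') = G\<^sup>2 + H\<^sup>2 + (a * b' + a' * b)"
    using G(2) H(2) by (simp add: algebra_simps)
  also have "\<dots> \<le> 2 * G\<^sup>2 + K" using HH cross by simp
  also have "\<dots> \<le> (2 * G + u * G / H)\<^sup>2"
  proof -
    define L where "L = u / H"
    have L: "u * G / H = G * L" "u\<^sup>2 / H\<^sup>2 = L\<^sup>2" by (simp_all add: L_def power_divide)
    have L0: "L \<ge> 0" using pos H(1) by (simp add: L_def)
    have "(2 * G + G * L)\<^sup>2 = 4 * G\<^sup>2 + 4 * G * G * L + G\<^sup>2 * L\<^sup>2"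
      by (simp add: power2_eq_square algebra_simps)
    moreover have "4 * G * G * L \<ge> 0" using G(1) L0 by simp
    ultimately show ?thesis unfolding K_def L by (simp add: algebra_simps)
  qed
  finally have "d\<^sup>2 \<le> (2 * G + u * G / H)\<^sup>2" using dsq by linarith
  then have dle: "d \<le> 2 * G + u * G / H"
  proof (rule power2_le_imp_le)
    show "0 \<le> 2 * G + u * G / H" using G(1) H(1) pos(5) by (simp add: add_nonneg_nonneg)
  qed
  define L where "L = u / H"
  have L0: "L \<ge> 0" using pos H(1) by (simp add: L_def)
  have e1: "u * d / (G * H) = L * d / G" using H(1) by (simp add: L_def)
  have e2: "u * G / H = G * L" by (simp add: L_def)
  have "L * d / G \<le> L * (2 * G + G * L) / G"
    using dle pos G(1) L0 unfolding e2 by (intro divide_right_mono mult_left_mono) auto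
  also have "\<dots> = 2 * L + L\<^sup>2"
    using G(1) by (simp add: power2_eq_square field_simps)
  finally have "u * d / (G * H) \<le> 2 * L + L\<^sup>2" using e1 by simp
  then show ?thesis unfolding G_def H_def L_def .
qed



definition Cq :: "'a::metric_space \<Rightarrow> 'a \<Rightarrow> 'a \<Rightarrow> real" where
  "Cq x y p = dist x y / sqrt (dist x p * dist y p)"

lemma Cq_sym: "Cq x y p = Cq y x p"
  by (simp add: Cq_def dist_commute mult.commute)

lemma Cq_nonneg: "Cq x y p \<ge> 0"
  by (simp add: Cq_def)

lemma dist_diff_abs: "\<bar>dist x p - dist y p\<bar> \<le> dist x y"
  using dist_triangle[of x p y] dist_triangle[of y p x] by (simp add: dist_commute abs_le_iff)

lemma AL:
  fixes x y p w :: "'a::metric_space"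
  assumes "p \<noteq> x" "p \<noteq> y" "w \<noteq> x" "w \<noteq> y" "Cq x y p \<le> B" "Cq x y w \<le> B"
  shows "dist x y * dist p w / (sqrt (dist x p * dist y p) * sqrt (dist x w * dist y w)) \<le> 2 * B + B\<^sup>2"
proof -
  have mono: "2 * t + t\<^sup>2 \<le> 2 * B + B\<^sup>2" if "0 \<le> t" "t \<le> B" for t
    using that by (simp add: power_mono add_mono)
  have pos: "dist x p > 0" "dist y p > 0" "dist x w > 0" "dist y w > 0" using assms by auto
  show ?thesis
  proof (cases "dist x w * dist y w \<le> dist x p * dist y p")
    case True
    have "dist x y * dist p w / (sqrt (dist x p * dist y p) * sqrt (dist x w * dist y w))
        \<le> 2 * (dist x y / sqrt (dist x w * dist y w)) + (dist x y / sqrt (dist x w * dist y w))\<^sup>2"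
      using pos True dist_diff_abs[of x p y] dist_diff_abs[of x w y]
        dist_triangle[of p w x] dist_triangle[of p w y]
      by (intro AL_real) (auto simp: dist_commute)
    also have "\<dots> \<le> 2 * B + B\<^sup>2" using assms(6) by (intro mono) (auto simp: Cq_def)
    finally show ?thesis .
  next
    case False
    have "dist x y * dist w p / (sqrt (dist x w * dist y w) * sqrt (dist x p * dist y p))
        \<le> 2 * (dist x y / sqrt (dist x p * dist y p)) + (dist x y / sqrt (dist x p * dist y p))\<^sup>2"
      using pos False dist_diff_abs[of x p y] dist_diff_abs[of x w y]
        dist_triangle[of w p x] dist_triangle[of w p y]
      by (intro AL_real) (auto simp: dist_commute)
    also have "\<dots> \<le> 2 * B + B\<^sup>2" using assms(5) by (intro mono) (auto simp: Cq_def)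
    finally show ?thesis by (simp add: dist_commute mult.commute)
  qed
qed

lemma frontier_notin: "open D \<Longrightarrow> p \<in> frontier D \<Longrightarrow> p \<notin> D"
  by (simp add: frontier_def interior_open)

lemma seg_front:
  fixes D :: "'a::real_normed_vector set"
  assumes "open D" "x \<in> D" "w \<notin> D"
  shows "\<exists>s. 0 < s \<and> s \<le> 1 \<and> (1 - s) *\<^sub>R x + s *\<^sub>R w \<in> frontier D"
proof -
  have "closed_segment x w \<inter> frontier D \<noteq> {}"
    using assms by (intro connected_Int_frontier) auto
  then obtain q where q: "q \<in> closed_segment x w" "q \<in> frontier D" by blast
  then obtain s where s: "0 \<le> s" "s \<le> 1" "q = (1 - s) *\<^sub>R x + s *\<^sub>R w"
    unfolding closed_segment_def by blast
  have "s \<noteq> 0" using s q(2) frontier_notin[OF assms(1)] assms(2) by auto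
  then show ?thesis using s q by (intro exI[of _ s]) auto
qed

lemma Cq_le_seg:
  fixes x y w :: "'a::real_normed_vector"
  assumes s: "0 < s" "s \<le> 1" and u: "dist x y \<le> 2 * dist y w"
    and q: "q = (1 - s) *\<^sub>R x + s *\<^sub>R w" and qx: "q \<noteq> x" and qy: "q \<noteq> y"
    and wx: "w \<noteq> x" and wy: "w \<noteq> y"
  shows "Cq x y w \<le> Cq x y q"
proof -
  have dxq: "dist x q = s * dist x w"
  proof -
    have "x - q = s *\<^sub>R (x - w)" using q by (simp add: algebra_simps)
    then show ?thesis using s by (simp add: dist_norm)
  qed
  have dyq: "dist y q \<le> (1 - s) * dist x y + s * dist y w"
  proof -
    have "y - q = (1 - s) *\<^sub>R (y - x) + s *\<^sub>R (y - w)" using q by (simp add: algebra_simps)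
    then have "dist y q = norm ((1 - s) *\<^sub>R (y - x) + s *\<^sub>R (y - w))" by (simp add: dist_norm)
    also have "\<dots> \<le> norm ((1 - s) *\<^sub>R (y - x)) + norm (s *\<^sub>R (y - w))" by (rule norm_triangle_ineq)
    also have "\<dots> = (1 - s) * dist x y + s * dist y w" using s by (simp add: dist_norm norm_minus_commute)
    finally show ?thesis .
  qed
  have pos: "dist x q > 0" "dist y q > 0" "dist x w > 0" "dist y w > 0" using qx qy wx wy by auto
  have key: "s * ((1 - s) * dist x y + s * dist y w) \<le> dist y w"
  proof -
    have "(1 - s) * (s * dist x y) \<le> (1 - s) * ((1 + s) * dist y w)"
    proof (rule mult_left_mono)
      have a1: "s * dist x y \<le> s * (2 * dist y w)" using s u by (intro mult_left_mono) auto
      have a2: "(2 * s) * dist y w \<le> (1 + s) * dist y w" by (rule mult_right_mono) (use s in auto)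
      show "s * dist x y \<le> (1 + s) * dist y w" using a1 a2 by (simp add: algebra_simps)
    qed (use s in auto)
    then show ?thesis by (simp add: algebra_simps power2_eq_square)
  qed
  have "dist x q * dist y q \<le> dist x w * dist y w"
  proof -
    have "dist x q * dist y q \<le> s * dist x w * ((1 - s) * dist x y + s * dist y w)"
      using dxq dyq pos s by (simp add: mult_left_mono)
    also have "\<dots> = dist x w * (s * ((1 - s) * dist x y + s * dist y w))" by (simp add: algebra_simps)
    also have "\<dots> \<le> dist x w * dist y w" using key pos by (intro mult_left_mono) auto
    finally show ?thesis .
  qed
  then have "sqrt (dist x q * dist y q) \<le> sqrt (dist x w * dist y w)" by simp
  then show ?thesis unfolding Cq_def using pos
    by (intro divide_left_mono) auto
qed



lemma sup_facts:
  fixes D :: "'a::real_normed_vector set"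
  assumes D: "open D" "D \<noteq> {}" "D \<noteq> UNIV" and xy: "x \<in> D" "y \<in> D"
  shows "frontier D \<noteq> {}" "bdd_above (Cq x y ` frontier D)"
    "\<And>w. w \<notin> D \<Longrightarrow> Cq x y w \<le> (SUP p\<in>frontier D. Cq x y p)"
    "0 \<le> (SUP p\<in>frontier D. Cq x y p)"
proof -
  show ne: "frontier D \<noteq> {}" using D frontier_not_empty by blast
  obtain e1 where e1: "e1 > 0" "ball x e1 \<subseteq> D" using D(1) xy(1) open_contains_ball by blast
  obtain e2 where e2: "e2 > 0" "ball y e2 \<subseteq> D" using D(1) xy(2) open_contains_ball by blast
  have "Cq x y p \<le> dist x y / sqrt (e1 * e2)" if "p \<in> frontier D" for p
  proof -
    have "p \<notin> D" using frontier_notin[OF D(1) that] .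
    then have "dist x p \<ge> e1" "dist y p \<ge> e2" using e1 e2 by (auto simp: subset_eq not_less)
    then have "e1 * e2 \<le> dist x p * dist y p" using e1 e2 by (intro mult_mono) auto
    moreover have "0 < e1 * e2" using e1 e2 by simp
    ultimately have pp: "0 < dist x p * dist y p" by linarith
    have "sqrt (e1 * e2) \<le> sqrt (dist x p * dist y p)" using \<open>e1 * e2 \<le> _\<close> by simp
    then show ?thesis unfolding Cq_def using e1 e2 pp by (intro divide_left_mono) auto
  qed
  then show bdd: "bdd_above (Cq x y ` frontier D)" by (intro bdd_aboveI2) 
  show "0 \<le> (SUP p\<in>frontier D. Cq x y p)"
  proof -
    obtain p where "p \<in> frontier D" using ne by blast
    then have "Cq x y p \<le> (SUP p\<in>frontier D. Cq x y p)" using bdd by (rule cSUP_upper)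
    then show ?thesis using Cq_nonneg[of x y p] by linarith
  qed
  show "Cq x y w \<le> (SUP p\<in>frontier D. Cq x y p)" if w: "w \<notin> D" for w
  proof -
    have wx: "w \<noteq> x" "w \<noteq> y" using w xy by auto
    show ?thesis
    proof (cases "dist x y \<le> 2 * dist y w")
      case True
      obtain s where s: "0 < s" "s \<le> 1" "(1 - s) *\<^sub>R x + s *\<^sub>R w \<in> frontier D"
        using seg_front[OF D(1) xy(1) w] by blast
      define q where "q = (1 - s) *\<^sub>R x + s *\<^sub>R w"
      have q: "q \<in> frontier D" using s q_def by simp
      then have "q \<noteq> x" "q \<noteq> y" using frontier_notin[OF D(1)] xy by auto
      then have "Cq x y w \<le> Cq x y q" using s True wx by (intro Cq_le_seg[OF _ _ _ q_def]) auto
      also have "\<dots> \<le> (SUP p\<in>frontier D. Cq x y p)" using bdd q by (rule cSUP_upper2) simp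
      finally show ?thesis .
    next
      case False
      then have F: "dist y x \<le> 2 * dist x w"
        using dist_triangle[of x y w] by (simp add: dist_commute)
      obtain s where s: "0 < s" "s \<le> 1" "(1 - s) *\<^sub>R y + s *\<^sub>R w \<in> frontier D"
        using seg_front[OF D(1) xy(2) w] by blast
      define q where "q = (1 - s) *\<^sub>R y + s *\<^sub>R w"
      have q: "q \<in> frontier D" using s q_def by simp
      then have "q \<noteq> x" "q \<noteq> y" using frontier_notin[OF D(1)] xy by auto
      then have "Cq y x w \<le> Cq y x q" using s F wx by (intro Cq_le_seg[OF _ _ _ q_def]) auto
      then have "Cq x y w \<le> Cq x y q" by (simp add: Cq_sym)
      also have "\<dots> \<le> (SUP p\<in>frontier D. Cq x y p)" using bdd q by (rule cSUP_upper2) simp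
      finally show ?thesis .
    qed
  qed
qed

lemma trans1:
  assumes k: "kx > 0" "ky > 0" "kp > 0" and a: "a > 0" "a' > 0"
    and e: "dXY = kx * ky * u" "dXp = kx * kp * a" "dYp = ky * kp * a'"
  shows "dXY / sqrt (dXp * dYp) = sqrt (kx * ky) / kp * (u / sqrt (a * a'))"
proof -
  have s: "sqrt (dXp * dYp) = kp * sqrt (kx * ky) * sqrt (a * a')"
  proof -
    have "dXp * dYp = kp\<^sup>2 * (kx * ky) * (a * a')" using e by (simp add: power2_eq_square algebra_simps)
    then show ?thesis using k by (simp add: real_sqrt_mult)
  qed
  have kk: "kx * ky = sqrt (kx * ky) * sqrt (kx * ky)" using k by simp
  have "dXY / sqrt (dXp * dYp) = sqrt (kx * ky) * sqrt (kx * ky) * u / (kp * sqrt (kx * ky) * sqrt (a * a'))"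
    using e(1) s kk by simp
  also have "\<dots> = sqrt (kx * ky) / kp * (u / sqrt (a * a'))"
    using k a by (simp add: field_simps)
  finally show ?thesis .
qed

lemma trans2:
  assumes k: "kx > 0" "ky > 0" "c > 0"
    and e: "dXY = kx * ky * u" "dXp = kx * c" "dYp = ky * c"
  shows "dXY / sqrt (dXp * dYp) = sqrt (kx * ky) * u / c"
proof -
  have s: "sqrt (dXp * dYp) = c * sqrt (kx * ky)"
  proof -
    have "dXp * dYp = c\<^sup>2 * (kx * ky)" using e by (simp add: power2_eq_square algebra_simps)
    then show ?thesis using k by (simp add: real_sqrt_mult)
  qed
  have kk: "kx * ky = sqrt (kx * ky) * sqrt (kx * ky)" using k by simp
  have "dXY / sqrt (dXp * dYp) = sqrt (kx * ky) * sqrt (kx * ky) * u / (c * sqrt (kx * ky))"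
    using e(1) s kk by simp
  also have "\<dots> = sqrt (kx * ky) * u / c"
    using k by (simp add: field_simps)
  finally show ?thesis .
qed



lemma inv_eq: "1 = (a::real) * b * c \<Longrightarrow> b > 0 \<Longrightarrow> c > 0 \<Longrightarrow> a = 1 / (b * c)"
  by (simp add: field_simps)

lemma U:
  fixes D D' :: "(real ^ 'n) set" and f :: "'n ext \<Rightarrow> 'n ext"
  assumes pD: "proper_domain D" and pD': "proper_domain D'"
    and dc: "dconf f" and bj: "bij f"
    and im: "f ` (Some ` D) = Some ` D'"
    and x: "x \<in> D" and y: "y \<in> D"
  shows "sic_metric D' (the (f (Some x))) (the (f (Some y))) \<le> 2 * sic_metric D x y"
proof -
  obtain k where kpos: "\<And>z. k z > 0" and keq: "\<And>z w. dd (f z) (f w) = k z * k w * dd z w"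
    using dc unfolding dconf_def by blast
  have oD: "open D" "D \<noteq> {}" "D \<noteq> UNIV" using pD by (auto simp: proper_domain_def)
  have oD': "open D'" "D' \<noteq> {}" "D' \<noteq> UNIV" using pD' by (auto simp: proper_domain_def)
  have fin: "f (Some z) = Some (the (f (Some z))) \<and> the (f (Some z)) \<in> D'" if "z \<in> D" for z
  proof -
    have "f (Some z) \<in> Some ` D'" using im that by blast
    then show ?thesis by auto
  qed
  define X where "X = the (f (Some x))"
  define Y where "Y = the (f (Some y))"
  have fx: "f (Some x) = Some X" "X \<in> D'" using fin[OF x] by (auto simp: X_def)
  have fy: "f (Some y) = Some Y" "Y \<in> D'" using fin[OF y] by (auto simp: Y_def)
  define B where "B = (SUP p\<in>frontier D. Cq x y p)"
  have B0: "0 \<le> B" and ext: "\<And>w. w \<notin> D \<Longrightarrow> Cq x y w \<le> B"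
    using sup_facts[OF oD x y] by (auto simp: B_def)
  have ne': "frontier D' \<noteq> {}" and B'0: "0 \<le> (SUP p\<in>frontier D'. Cq X Y p)"
    using sup_facts[OF oD' fx(2) fy(2)] by auto
  have notD: "z \<notin> D" if "f (Some z) = Some p'" "p' \<notin> D'" for z p'
    using fin that by fastforce
  have surj: "\<exists>z. f z = v" for v using bj by (metis bij_pointE)
  have dXY: "dist X Y = k (Some x) * k (Some y) * dist x y"
    using keq[of "Some x" "Some y"] fx fy by simp
  have mono: "Cq x y w \<le> 2 * B + B\<^sup>2" if "w \<notin> D" for w
    using ext[OF that] B0 zero_le_power2[of B] by linarith
  have main: "Cq X Y p' \<le> 2 * B + B\<^sup>2" if p': "p' \<in> frontier D'" for p'
  proof -
    have p'n: "p' \<notin> D'" using frontier_notin[OF oD'(1) p'] .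
    obtain z where fz: "f z = Some p'" using surj by blast
    show ?thesis
    proof (cases z)
      case None
      obtain z0 where fz0: "f z0 = None" using surj by blast
      then obtain w where fw: "f (Some w) = None" using fz None by (cases z0) auto
      have wD: "w \<notin> D" using fin fw by fastforce
      have wxy: "w \<noteq> x" "w \<noteq> y" using wD x y by auto
      let ?kx = "k (Some x)" and ?ky = "k (Some y)" and ?kw = "k (Some w)" and ?kN = "k None"
      have e1: "1 = ?kw * ?kN" using keq[of "Some w" None] fw fz None by simp
      have e2: "1 = ?kx * ?kw * dist x w" using keq[of "Some x" "Some w"] fw fx by simp
      have e3: "1 = ?ky * ?kw * dist y w" using keq[of "Some y" "Some w"] fw fy by simp
      have e4: "dist X p' = ?kx * ?kN" using keq[of "Some x" None] fz None fx by simp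
      have e5: "dist Y p' = ?ky * ?kN" using keq[of "Some y" None] fz None fy by simp
      have kwp: "?kw > 0" using kpos by blast
      have kx: "?kx = 1 / (?kw * dist x w)" using e2 kwp by (intro inv_eq) (use wxy in auto)
      have ky: "?ky = 1 / (?kw * dist y w)" using e3 kwp by (intro inv_eq) (use wxy in auto)
      have kN: "?kN = 1 / ?kw" using e1 kwp by (simp add: field_simps)
      have "Cq X Y p' = sqrt (?kx * ?ky) * dist x y / ?kN"
        unfolding Cq_def using kpos by (intro trans2[OF _ _ _ dXY e4 e5]) auto
      also have "\<dots> = Cq x y w"
      proof -
        have pw: "dist x w > 0" "dist y w > 0" using wxy by auto
        have "sqrt (?kx * ?ky) = 1 / (?kw * sqrt (dist x w * dist y w))"
          using kwp pw unfolding kx ky by (simp add: real_sqrt_mult real_sqrt_divide power2_eq_square[symmetric])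
        then show ?thesis unfolding kN Cq_def using kwp pw by simp
      qed
      finally show ?thesis using mono[OF wD] by simp
    next
      case (Some p)
      have fp: "f (Some p) = Some p'" using fz Some by simp
      have pD: "p \<notin> D" using notD[OF fp p'n] .
      have pxy: "p \<noteq> x" "p \<noteq> y" using pD x y by auto
      let ?kx = "k (Some x)" and ?ky = "k (Some y)" and ?kp = "k (Some p)" and ?kN = "k None"
      have e4: "dist X p' = ?kx * ?kp * dist x p" using keq[of "Some x" "Some p"] fp fx by simp
      have e5: "dist Y p' = ?ky * ?kp * dist y p" using keq[of "Some y" "Some p"] fp fy by simp
      have T: "Cq X Y p' = sqrt (?kx * ?ky) / ?kp * Cq x y p"
        unfolding Cq_def using kpos pxy by (intro trans1[OF _ _ _ _ _ dXY e4 e5]) auto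
      show ?thesis
      proof (cases "f None")
        case None
        have a: "1 = ?kx * ?kN" using keq[of "Some x" None] fx None by simp
        have b: "1 = ?ky * ?kN" using keq[of "Some y" None] fy None by simp
        have c: "1 = ?kp * ?kN" using keq[of "Some p" None] fp None by simp
        have kNp: "?kN > 0" using kpos by blast
        have "?kx = ?kp" "?ky = ?kp" using a b c kNp by (metis mult_right_cancel less_irrefl)+
        then have "sqrt (?kx * ?ky) / ?kp = 1" using kpos[of "Some p"] by simp
        then have "Cq X Y p' = Cq x y p" by (simp only: T mult.left_neutral)
        then show ?thesis using mono[OF pD] by simp
      next
        case (Some c)
        obtain z0 where fz0: "f z0 = None" using surj by blast
        then obtain w where fw: "f (Some w) = None" using Some by (cases z0) auto
        have wD: "w \<notin> D" using fin fw by fastforce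
        have wxy: "w \<noteq> x" "w \<noteq> y" using wD x y by auto
        have wp: "w \<noteq> p" using fw fp by auto
        let ?kw = "k (Some w)"
        have kwp: "?kw > 0" using kpos by blast
        have e2: "1 = ?kx * ?kw * dist x w" using keq[of "Some x" "Some w"] fw fx by simp
        have e3: "1 = ?ky * ?kw * dist y w" using keq[of "Some y" "Some w"] fw fy by simp
        have e6: "1 = ?kp * ?kw * dist p w" using keq[of "Some p" "Some w"] fw fp by simp
        have kx: "?kx = 1 / (?kw * dist x w)" using e2 kwp by (intro inv_eq) (use wxy in auto)
        have ky: "?ky = 1 / (?kw * dist y w)" using e3 kwp by (intro inv_eq) (use wxy in auto)
        have kp: "?kp = 1 / (?kw * dist p w)" using e6 kwp by (intro inv_eq) (use wp in auto)
        have pw: "dist x w > 0" "dist y w > 0" "dist p w > 0" using wxy wp by auto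
        have SQ: "sqrt (?kx * ?ky) = 1 / (?kw * sqrt (dist x w * dist y w))"
          using kwp pw unfolding kx ky by (simp add: real_sqrt_mult real_sqrt_divide power2_eq_square[symmetric])
        have "Cq X Y p' = sqrt (?kx * ?ky) / ?kp * Cq x y p" by (rule T)
        also have "\<dots> = dist x y * dist p w / (sqrt (dist x p * dist y p) * sqrt (dist x w * dist y w))"
          unfolding SQ kp Cq_def using kwp pw by (simp add: mult.commute)
        finally have "Cq X Y p' = dist x y * dist p w / (sqrt (dist x p * dist y p) * sqrt (dist x w * dist y w))" .
        also have "\<dots> \<le> 2 * B + B\<^sup>2"
          using pxy wxy wp ext[OF pD] ext[OF wD] by (intro AL) auto
        finally show ?thesis .
      qed
    qed
  qed
  have "(SUP p\<in>frontier D'. Cq X Y p) \<le> 2 * B + B\<^sup>2"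
    using ne' main by (intro cSUP_least) auto
  then have "1 + (SUP p\<in>frontier D'. Cq X Y p) \<le> (1 + B)\<^sup>2" by (simp add: power2_eq_square algebra_simps)
  then have "ln (1 + (SUP p\<in>frontier D'. Cq X Y p)) \<le> ln ((1 + B)\<^sup>2)"
    using B'0 B0 by (subst ln_le_cancel_iff) auto
  also have "\<dots> = 2 * ln (1 + B)" using B0 by (simp add: ln_realpow)
  finally show ?thesis
    unfolding sic_metric_def X_def[symmetric] Y_def[symmetric] B_def Cq_def .
qed

lemma dconf_inv:
  assumes "dconf f" "bij f"
  shows "dconf (inv f)"
proof -
  obtain k where kpos: "\<And>z. k z > 0" and keq: "\<And>z w. dd (f z) (f w) = k z * k w * dd z w"
    using assms(1) unfolding dconf_def by blast
  have ff: "f (inv f z) = z" for z using assms(2) by (simp add: bij_is_surj surj_f_inv_f)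
  have "dd (inv f z) (inv f w) = (1 / k (inv f z)) * (1 / k (inv f w)) * dd z w" for z w
  proof -
    have "dd z w = k (inv f z) * k (inv f w) * dd (inv f z) (inv f w)"
      using keq[of "inv f z" "inv f w"] ff by simp
    then show ?thesis using kpos[of "inv f z"] kpos[of "inv f w"] by (simp add: field_simps)
  qed
  moreover have "\<forall>z. 1 / k (inv f z) > 0" using kpos by simp
  ultimately show ?thesis unfolding dconf_def by (intro exI[of _ "\<lambda>z. 1 / k (inv f z)"]) auto
qed

theorem theorem5p2:
  fixes D D' :: "(real ^ 'n) set" and f :: "'n ext \<Rightarrow> 'n ext"
  assumes "CARD('n) \<ge> 2"
    and "proper_domain D" and "proper_domain D'"
    and "mobius f"
    and "f ` (Some ` D) = Some ` D'"
    and "x \<in> D" and "y \<in> D"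
  shows "sic_metric D x y / 2 \<le> sic_metric D' (the (f (Some x))) (the (f (Some y)))
       \<and> sic_metric D' (the (f (Some x))) (the (f (Some y))) \<le> 2 * sic_metric D x y"
proof -
  have dc: "dconf f" and bj: "bij f" using mobius_props[OF assms(4)] by auto
  have up: "sic_metric D' (the (f (Some x))) (the (f (Some y))) \<le> 2 * sic_metric D x y"
    using U[OF assms(2,3) dc bj assms(5,6,7)] .
  define g where "g = inv f"
  have bg: "bij g" unfolding g_def using bj by (rule bij_imp_bij_inv)
  have dg: "dconf g" unfolding g_def using dconf_inv[OF dc bj] .
  have injf: "inj f" using bj bij_is_inj by blast
  have img: "g ` (Some ` D') = Some ` D"
    using assms(5) image_inv_f_f[OF injf, of "Some ` D"] by (simp add: g_def)
  have fin: "f (Some z) = Some (the (f (Some z))) \<and> the (f (Some z)) \<in> D'" if "z \<in> D" for z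
  proof -
    have "f (Some z) \<in> Some ` D'" using assms(5) that by blast
    then show ?thesis by auto
  qed
  have gx: "g (Some (the (f (Some x)))) = Some x"
    using fin[OF assms(6)] inv_f_f[OF injf, of "Some x"] by (simp add: g_def)
  have gy: "g (Some (the (f (Some y)))) = Some y"
    using fin[OF assms(7)] inv_f_f[OF injf, of "Some y"] by (simp add: g_def)
  have "sic_metric D (the (g (Some (the (f (Some x)))))) (the (g (Some (the (f (Some y))))))
      \<le> 2 * sic_metric D' (the (f (Some x))) (the (f (Some y)))"
    using U[OF assms(3,2) dg bg img] fin[OF assms(6)] fin[OF assms(7)] by blast
  then have "sic_metric D x y \<le> 2 * sic_metric D' (the (f (Some x))) (the (f (Some y)))"
    using gx gy by simp
  then show ?thesis using up by simp
qed


end
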